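(* Let $X_1,\dots,X_n$ be variables with ranges $D_1,\dots,D_n$ and let $A_1,\dots,A_m$ be events (sets of full assignments), $A_i$ depending only on the variables indexed by $\mathrm{vbl}(A_i)\subseteq[n]$, with dependency graph $G$ on $[m]$ (distinct $i,j$ adjacent iff $\mathrm{vbl}(A_i)\cap\mathrm{vbl}(A_j)\neq\emptyset$). Let $\sigma$ be an assignment and let $\sigma'$ be another assignment such that $\mathrm{Bad}(\sigma')\subseteq\mathrm{Res}(\sigma)$ and $\sigma,\sigma'$ agree on all variables in $\mathrm{vbl}(\mathrm{Res}(\sigma))$. Then $\mathrm{Res}(\sigma')=\mathrm{Res}(\sigma)$.
   Context: Notation: $\mathrm{Bad}(\sigma)=\{i:\sigma\in A_i\}$; for $S\subseteq[m]$, $\partial S=\{i\notin S:\ i\text{ adjacent in }G\text{ to some }j\in S\}$ and $\mathrm{vbl}(S)=\bigcup_{i\in S}\mathrm{vbl}(A_i)$. We write $A_i\cap\sigma_S=\emptyset$ if either $\mathrm{vbl}(A_i)\cap\mathrm{vbl}(S)=\emptyset$, or no assignment agreeing with $\sigma$ on $\mathrm{vbl}(A_i)\cap\mathrm{vbl}(S)$ belongs to $A_i$; otherwise $A_i\cap\sigma_S\ne\emptyset$. $\mathrm{Res}(\sigma)$ is the output of the procedure: start with $R=\mathrm{Bad}(\sigma)$, $N=\emptyset$; while $\partial R\setminus N\neq\emptyset$, for each $i\in\partial R\setminus N$ (with $R$ the current set), put $i$ into $R$ if $A_i\cap\sigma_R\ne\emptyset$ and into $N$ otherwise; finally output $R$.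 *)

theory Defs
  imports Main "HOL-Library.FuncSet" "HOL-Library.While_Combinator"
begin

text \<open>Variables are indexed by j < n with ranges D j; events are indexed by i < m.
 A (full) assignment is an element of PiE {..<n} D.\<close>

definition assignments :: "nat \<Rightarrow> (nat \<Rightarrow> 'a set) \<Rightarrow> (nat \<Rightarrow> 'a) set" where
  "assignments n D = PiE {..<n} D"

definition dep_adj :: "(nat \<Rightarrow> nat set) \<Rightarrow> nat \<Rightarrow> nat \<Rightarrow> bool" where
  "dep_adj vbl i j \<longleftrightarrow> i \<noteq> j \<and> vbl i \<inter> vbl j \<noteq> {}"

definition Bad :: "nat \<Rightarrow> (nat \<Rightarrow> ('v \<Rightarrow> 'a) set) \<Rightarrow> ('v \<Rightarrow> 'a) \<Rightarrow> nat set" where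
  "Bad m A \<sigma> = {i. i < m \<and> \<sigma> \<in> A i}"

definition bdry :: "nat \<Rightarrow> (nat \<Rightarrow> nat set) \<Rightarrow> nat set \<Rightarrow> nat set" where
  "bdry m vbl S = {i. i < m \<and> i \<notin> S \<and> (\<exists>j\<in>S. dep_adj vbl i j)}"

definition vblS :: "(nat \<Rightarrow> nat set) \<Rightarrow> nat set \<Rightarrow> nat set" where
  "vblS vbl S = (\<Union>i\<in>S. vbl i)"

text \<open>The relation A_i \<inter> \<sigma>_S \<noteq> \<emptyset>.\<close>
definition meets :: "nat \<Rightarrow> (nat \<Rightarrow> 'a set) \<Rightarrow> (nat \<Rightarrow> nat set) \<Rightarrow> (nat \<Rightarrow> (nat \<Rightarrow> 'a) set)
    \<Rightarrow> nat \<Rightarrow> (nat \<Rightarrow> 'a) \<Rightarrow> nat set \<Rightarrow> bool" where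
  "meets n D vbl A i \<sigma> S \<longleftrightarrow>
     vbl i \<inter> vblS vbl S \<noteq> {} \<and>
     (\<exists>\<tau>\<in>assignments n D. (\<forall>j\<in>vbl i \<inter> vblS vbl S. \<tau> j = \<sigma> j) \<and> \<tau> \<in> A i)"

definition res_step :: "nat \<Rightarrow> nat \<Rightarrow> (nat \<Rightarrow> 'a set) \<Rightarrow> (nat \<Rightarrow> nat set) \<Rightarrow> (nat \<Rightarrow> (nat \<Rightarrow> 'a) set)
    \<Rightarrow> (nat \<Rightarrow> 'a) \<Rightarrow> nat set \<times> nat set \<Rightarrow> nat set \<times> nat set" where
  "res_step n m D vbl A \<sigma> RN = (case RN of (R, N) \<Rightarrow>
     (R \<union> {i \<in> bdry m vbl R - N. meets n D vbl A i \<sigma> R},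
      N \<union> {i \<in> bdry m vbl R - N. \<not> meets n D vbl A i \<sigma> R}))"

definition Res :: "nat \<Rightarrow> nat \<Rightarrow> (nat \<Rightarrow> 'a set) \<Rightarrow> (nat \<Rightarrow> nat set) \<Rightarrow> (nat \<Rightarrow> (nat \<Rightarrow> 'a) set)
    \<Rightarrow> (nat \<Rightarrow> 'a) \<Rightarrow> nat set" where
  "Res n m D vbl A \<sigma> =
     fst (the (while_option (\<lambda>(R, N). bdry m vbl R - N \<noteq> {})
                            (res_step n m D vbl A \<sigma>) (Bad m A \<sigma>, {})))"

end

theory Submission
  imports Defs
begin

lemma res_term:
  "\<exists>k. \<not> (\<lambda>(R, N). bdry m vbl R - N \<noteq> {}) ((res_step n m D vbl A \<sigma> ^^ k) (Bad m A \<sigma>, {}))"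
proof -
  let ?b = "\<lambda>(R, N). bdry m vbl R - N \<noteq> {}"
  let ?c = "res_step n m D vbl A \<sigma>"
  let ?P = "\<lambda>(R, N). R \<subseteq> {..<m} \<and> N \<subseteq> {..<m}"
  let ?f = "\<lambda>(R::nat set, N). card ({..<m} - (R \<union> N))"
  have "\<exists>t. while_option ?b ?c (Bad m A \<sigma>, {}) = Some t"
  proof (rule measure_while_option_Some[where P = ?P and f = ?f])
    fix s assume Ps: "?P s" and bs: "?b s"
    obtain R N where s: "s = (R, N)" by fastforce
    define R' where "R' = R \<union> {i \<in> bdry m vbl R - N. meets n D vbl A i \<sigma> R}"
    define N' where "N' = N \<union> {i \<in> bdry m vbl R - N. \<not> meets n D vbl A i \<sigma> R}"
    have bd: "bdry m vbl R \<subseteq> {..<m}" by (auto simp: bdry_def)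
    have c': "?c (R, N) = (R', N')"
      by (simp add: res_step_def R'_def N'_def)
    obtain i where i: "i \<in> bdry m vbl R - N" using bs s by auto
    have iR: "i \<notin> R" using i by (auto simp: bdry_def)
    have RN: "R \<subseteq> {..<m}" "N \<subseteq> {..<m}" using Ps s by auto
    have R'N': "R' \<subseteq> {..<m}" "N' \<subseteq> {..<m}" using RN bd unfolding R'_def N'_def by auto
    have sub: "{..<m} - (R' \<union> N') \<subseteq> {..<m} - (R \<union> N)"
      unfolding R'_def N'_def by auto
    have "i \<in> {..<m} - (R \<union> N)" using i iR bd by auto
    moreover have "i \<notin> {..<m} - (R' \<union> N')" using i by (simp add: R'_def N'_def)
    ultimately have "{..<m} - (R' \<union> N') \<subset> {..<m} - (R \<union> N)"
      using sub by (metis psubsetI)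
    then have lt: "card ({..<m} - (R' \<union> N')) < card ({..<m} - (R \<union> N))"
      by (simp add: psubset_card_mono)
    show "?P (?c s) \<and> ?f (?c s) < ?f s"
      unfolding s c' using R'N' lt by simp
  next
    show "?P (Bad m A \<sigma>, {})" by (auto simp: Bad_def)
  qed
  then obtain t where "while_option ?b ?c (Bad m A \<sigma>, {}) = Some t" by blast
  from while_option_stop2[OF this] obtain k where
    k1: "t = (?c ^^ k) (Bad m A \<sigma>, {})" and k2: "\<not> ?b t" by (elim exE conjE)
  show ?thesis by (rule exI[where x = k]) (use k1 k2 in simp)
qed

lemma res_step_mono: "fst s \<subseteq> fst (res_step n m D vbl A \<sigma> s)"
  by (cases s) (auto simp: res_step_def)

lemma iter_mono: "fst ((res_step n m D vbl A \<sigma> ^^ k) s) \<subseteq> fst ((res_step n m D vbl A \<sigma> ^^ (k + d)) s)"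
proof (induction d)
  case 0 then show ?case by simp
next
  case (Suc d) then show ?case using res_step_mono[of "(res_step n m D vbl A \<sigma> ^^ (k + d)) s" n m D vbl A \<sigma>]
    by (simp add: subset_trans)
qed

lemma step_agree:
  assumes "R \<subseteq> S" and "\<forall>j\<in>vblS vbl S. \<sigma>' j = \<sigma> j"
  shows "res_step n m D vbl A \<sigma>' (R, N) = res_step n m D vbl A \<sigma> (R, N)"
proof -
  have "vblS vbl R \<subseteq> vblS vbl S" using assms(1) by (auto simp: vblS_def)
  hence "meets n D vbl A i \<sigma>' R = meets n D vbl A i \<sigma> R" for i
    using assms(2) unfolding meets_def by (metis IntD2 subsetD)
  then show ?thesis by (simp add: res_step_def)
qed

theorem lemma24:
  fixes n m :: nat
    and D :: "nat \<Rightarrow> 'a set"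
    and vbl :: "nat \<Rightarrow> nat set"
    and A :: "nat \<Rightarrow> (nat \<Rightarrow> 'a) set"
    and \<sigma> \<sigma>' :: "nat \<Rightarrow> 'a"
  assumes vbl_sub: "\<forall>i<m. vbl i \<subseteq> {..<n}"
    and A_sub: "\<forall>i<m. A i \<subseteq> assignments n D"
    and A_dep: "\<forall>i<m. \<forall>\<tau>\<in>assignments n D. \<forall>\<tau>'\<in>assignments n D.
                  (\<forall>j\<in>vbl i. \<tau> j = \<tau>' j) \<longrightarrow> (\<tau> \<in> A i \<longleftrightarrow> \<tau>' \<in> A i)"
    and \<sigma>: "\<sigma> \<in> assignments n D"
    and \<sigma>': "\<sigma>' \<in> assignments n D"
    and bad: "Bad m A \<sigma>' \<subseteq> Res n m D vbl A \<sigma>"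
    and agree: "\<forall>j\<in>vblS vbl (Res n m D vbl A \<sigma>). \<sigma>' j = \<sigma> j"
  shows "Res n m D vbl A \<sigma>' = Res n m D vbl A \<sigma>"
proof -
  let ?b = "\<lambda>(R, N). bdry m vbl R - N \<noteq> {}"
  let ?c = "res_step n m D vbl A \<sigma>"
  let ?c' = "res_step n m D vbl A \<sigma>'"
  define s where "s = (Bad m A \<sigma>, {}::nat set)"
  define K where "K = (LEAST k. \<not> ?b ((?c ^^ k) s))"
  have ex: "\<exists>k. \<not> ?b ((?c ^^ k) s)" unfolding s_def by (rule res_term)
  have wo: "while_option ?b ?c s = Some ((?c ^^ K) s)"
    using ex unfolding while_option_def K_def by simp
  define Rs where "Rs = fst ((?c ^^ K) s)"
  have ResEq: "Res n m D vbl A \<sigma> = Rs"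
    unfolding Res_def Rs_def using wo s_def by simp
  have Kstop: "\<not> ?b ((?c ^^ K) s)" unfolding K_def by (rule LeastI_ex[OF ex])
  have Kmin: "k < K \<Longrightarrow> ?b ((?c ^^ k) s)" for k unfolding K_def by (drule not_less_Least) simp
  have sub: "k \<le> K \<Longrightarrow> fst ((?c ^^ k) s) \<subseteq> Rs" for k
    unfolding Rs_def using iter_mono[where k=k and d="K - k" and s=s and \<sigma>=\<sigma>] by simp
  have agree': "\<forall>j\<in>vblS vbl Rs. \<sigma>' j = \<sigma> j" using agree ResEq by simp
  have badsub: "Bad m A \<sigma> \<subseteq> Rs" using sub[of 0] by (simp add: s_def)
  have "Bad m A \<sigma>' = Bad m A \<sigma>"
  proof
    show "Bad m A \<sigma>' \<subseteq> Bad m A \<sigma>"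
    proof
      fix i assume i: "i \<in> Bad m A \<sigma>'"
      hence im: "i < m" and "\<sigma>' \<in> A i" by (auto simp: Bad_def)
      have "i \<in> Rs" using i bad ResEq by auto
      hence "\<forall>j\<in>vbl i. \<sigma>' j = \<sigma> j" using agree' by (auto simp: vblS_def)
      hence "\<sigma> \<in> A i" using A_dep[rule_format, OF im \<sigma>' \<sigma>] \<open>\<sigma>' \<in> A i\<close> by simp
      then show "i \<in> Bad m A \<sigma>" using im by (simp add: Bad_def)
    qed
  next
    show "Bad m A \<sigma> \<subseteq> Bad m A \<sigma>'"
    proof
      fix i assume i: "i \<in> Bad m A \<sigma>"
      hence im: "i < m" and "\<sigma> \<in> A i" by (auto simp: Bad_def)
      have "i \<in> Rs" using i badsub by auto
      hence "\<forall>j\<in>vbl i. \<sigma>' j = \<sigma> j" using agree' by (auto simp: vblS_def)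
      hence "\<sigma>' \<in> A i" using A_dep[rule_format, OF im \<sigma>' \<sigma>] \<open>\<sigma> \<in> A i\<close> by simp
      then show "i \<in> Bad m A \<sigma>'" using im by (simp add: Bad_def)
    qed
  qed
  hence s': "(Bad m A \<sigma>', {}::nat set) = s" by (simp add: s_def)
  have same: "k \<le> K \<Longrightarrow> (?c' ^^ k) s = (?c ^^ k) s" for k
  proof (induction k)
    case 0 then show ?case by simp
  next
    case (Suc k)
    hence IH: "(?c' ^^ k) s = (?c ^^ k) s" by simp
    obtain R N where RN: "(?c ^^ k) s = (R, N)" by fastforce
    have "R \<subseteq> Rs" using sub[of k] Suc.prems RN by simp
    hence "?c' (R, N) = ?c (R, N)" using step_agree[OF \<open>R \<subseteq> Rs\<close> agree'] by simp
    then show ?case using IH RN by simp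
  qed
  have Kstop': "\<not> ?b ((?c' ^^ K) s)" using Kstop same[of K] by simp
  have ex': "\<exists>k. \<not> ?b ((?c' ^^ k) s)" by (rule exI[where x = K], rule Kstop')
  have "(LEAST k. \<not> ?b ((?c' ^^ k) s)) = K"
  proof (rule Least_equality)
    show "\<not> ?b ((?c' ^^ K) s)" by (rule Kstop')
  next
    fix y assume "\<not> ?b ((?c' ^^ y) s)"
    show "K \<le> y" proof (rule ccontr)
      assume "\<not> K \<le> y"
      hence "y < K" by simp
      have "?b ((?c ^^ y) s)" by (rule Kmin[OF \<open>y < K\<close>])
      moreover have "(?c' ^^ y) s = (?c ^^ y) s" using same[of y] \<open>y < K\<close> by simp
      ultimately show False using \<open>\<not> ?b ((?c' ^^ y) s)\<close> by simp
    qed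
  qed
  hence "while_option ?b ?c' s = Some ((?c ^^ K) s)"
    using ex' same[of K] unfolding while_option_def by simp
  hence "Res n m D vbl A \<sigma>' = fst ((?c ^^ K) s)"
    unfolding Res_def using s' by simp
  then show ?thesis using ResEq Rs_def by simp
qed

end
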